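(* Let $n\ge2$ and let $B_1,\dots,B_n$ be points in the plane with $B_i\ne B_{i+1}$ for all $i$ (indices mod $n$). Let $\varphi_i$ be the direction of the side $B_iB_{i+1}$ and $\theta_i=\varphi_i-\varphi_{i-1}$ the exterior angle at $B_i$. If $n$ is odd, the polygon has a unique framing. If $n$ is even, the polygon admits a framing if and only if $$\sum_{i\ \mathrm{odd}}\theta_i\equiv\sum_{i\ \mathrm{even}}\theta_i\equiv 0 \pmod{\pi},$$ in which case there is a one-parameter family of framings.
   Context: For nonzero plane vectors $u,v$, $\angle(u,v)\in\mathbb{R}/2\pi\mathbb{Z}$ is the angle through which $u$ must be rotated counterclockwise to align with $v$. A framing of the polygon $B_1,\dots,B_n$ is an assignment of unit vectors $u_1,\dots,u_n$ to its vertices such that $\angle(u_i,B_{i+1}-B_i)=\angle(B_{i+1}-B_i,u_{i+1})$ for all $i$ (indices mod $n$). Framings $(u_i)$ and $(-u_i)$ are identified (so uniqueness is up to this involution). *)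

theory Defs
  imports "HOL-Analysis.Analysis"
begin

text \<open>Polygon vertices B 0, ..., B (n-1) (0-based; indices mod n).
  The angle in R/2piZ through which u must be rotated counterclockwise to align with v
  is represented by its canonical representative Arg (v / u) in (-pi, pi].\<close>

definition ang :: "complex \<Rightarrow> complex \<Rightarrow> real" where
  "ang u v = Arg (v / u)"

definition side :: "nat \<Rightarrow> (nat \<Rightarrow> complex) \<Rightarrow> nat \<Rightarrow> complex" where
  "side n B i = B (Suc i mod n) - B i"

definition framing :: "nat \<Rightarrow> (nat \<Rightarrow> complex) \<Rightarrow> (nat \<Rightarrow> complex) \<Rightarrow> bool" where
  "framing n B u \<longleftrightarrow>
     (\<forall>i<n. norm (u i) = 1) \<and>
     (\<forall>i<n. ang (u i) (side n B i) = ang (side n B i) (u (Suc i mod n)))"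

text \<open>Direction phi_i of side B_i B_{i+1}, and exterior angle theta_i = phi_i - phi_{i-1}
  (a real representative; only its class mod 2pi matters for the mod-pi condition).\<close>
definition dir :: "nat \<Rightarrow> (nat \<Rightarrow> complex) \<Rightarrow> nat \<Rightarrow> real" where
  "dir n B i = Arg (side n B i)"

definition ext_angle :: "nat \<Rightarrow> (nat \<Rightarrow> complex) \<Rightarrow> nat \<Rightarrow> real" where
  "ext_angle n B i = dir n B i - dir n B ((i + n - 1) mod n)"

end

theory Submission
  imports Defs
begin

lemma step_iff:
  fixes u v s :: complex
  assumes u: "norm u = 1" and s: "s \<noteq> 0" and v: "norm v = 1"
  shows "Arg (s / u) = Arg (v / s) \<longleftrightarrow> v = s / cnj s * cnj u"
proof -
  have u0: "u \<noteq> 0" using u by auto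
  have v0: "v \<noteq> 0" using v by auto
  have cs: "cnj s \<noteq> 0" using s by simp
  have uu: "u * cnj u = 1" using complex_norm_square[of u] u by simp
  have uinv: "1 / u = cnj u" using uu u0 by (simp add: field_simps)
  have ss: "s * cnj s = of_real ((norm s)^2)" by (rule complex_norm_square[symmetric])
  have ns: "norm s > 0" using s by simp
  show ?thesis
  proof
    assume "Arg (s / u) = Arg (v / s)"
    then obtain x where x: "x > 0" "v / s = of_real x * (s / u)"
      using Arg_eq_iff[of "v/s" "s/u"] u0 v0 s by auto
    have "norm (v/s) = x * norm (s/u)" using x by (simp add: norm_mult norm_divide)
    hence "1 / norm s = x * norm s" using u v by (simp add: norm_divide)
    hence xe: "x = 1 / (norm s)^2" using ns by (simp add: field_simps power2_eq_square)
    have "v = s * (of_real x * (s / u))" using x s by (simp add: field_simps)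
    also have "\<dots> = s * s * cnj u / (s * cnj s)"
    proof -
      have "of_real x * (s * cnj s) = 1" unfolding ss xe using ns
        by (simp flip: of_real_mult)
      hence xx: "of_real x = 1 / (s * cnj s)" using s cs by (simp add: field_simps)
      show ?thesis unfolding xx using uinv s cs u0 by (simp add: field_simps)
    qed
    also have "\<dots> = s / cnj s * cnj u" using s cs by (simp add: field_simps)
    finally show "v = s / cnj s * cnj u" .
  next
    assume ve: "v = s / cnj s * cnj u"
    have "v / s = (s / u) * (1 / (s * cnj s))"
      using ve uinv s cs u0 by (simp add: field_simps)
    also have "1 / (s * cnj s) = of_real (1 / (norm s)^2)" unfolding ss by simp
    finally have "v / s = of_real (1 / (norm s)^2) * (s / u)" by (simp add: mult.commute)
    moreover have "(1 / (norm s)^2) > 0" using ns by simp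
    ultimately have "\<exists>x>0. v / s = of_real x * (s / u)" by blast
    hence "Arg (v / s) = Arg (s / u)"
      using Arg_eq_iff[of "v/s" "s/u"] u0 v0 s by simp
    thus "Arg (s / u) = Arg (v / s)" by simp
  qed
qed

fun Pp :: "(nat \<Rightarrow> complex) \<Rightarrow> nat \<Rightarrow> complex" where
  "Pp w 0 = 1" | "Pp w (Suc k) = w k * cnj (Pp w k)"

fun Uu :: "(nat \<Rightarrow> complex) \<Rightarrow> complex \<Rightarrow> nat \<Rightarrow> complex" where
  "Uu w z 0 = z" | "Uu w z (Suc k) = w k * cnj (Uu w z k)"

fun Aa :: "(nat \<Rightarrow> real) \<Rightarrow> nat \<Rightarrow> real" where
  "Aa f 0 = 0" | "Aa f (Suc k) = f k - Aa f k"

lemma Uu_Pp: "Uu w z k = Pp w k * (if even k then z else cnj z)"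
  by (induction k) auto

lemma Uu_neg: "Uu w (-z) k = - Uu w z k"
  by (induction k) auto

lemma Pp_norm: "(\<forall>j<k. norm (w j) = 1) \<Longrightarrow> norm (Pp w k) = 1"
  by (induction k) (auto simp: norm_mult)

lemma Uu_norm: "(\<forall>j<k. norm (w j) = 1) \<Longrightarrow> norm z = 1 \<Longrightarrow> norm (Uu w z k) = 1"
  using Pp_norm[of k w] by (simp add: Uu_Pp norm_mult)

definition wv :: "nat \<Rightarrow> (nat \<Rightarrow> complex) \<Rightarrow> nat \<Rightarrow> complex" where
  "wv n B k = side n B k / cnj (side n B k)"

lemma wv_norm: "side n B k \<noteq> 0 \<Longrightarrow> norm (wv n B k) = 1"
  by (simp add: wv_def norm_divide)

lemma framing_iff1:
  assumes "\<forall>i<n. side n B i \<noteq> 0"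
  shows "framing n B u \<longleftrightarrow> (\<forall>i<n. norm (u i) = 1) \<and>
          (\<forall>i<n. u (Suc i mod n) = wv n B i * cnj (u i))"
proof -
  have "(\<forall>i<n. ang (u i) (side n B i) = ang (side n B i) (u (Suc i mod n)))
        \<longleftrightarrow> (\<forall>i<n. u (Suc i mod n) = wv n B i * cnj (u i))"
    if nu: "\<forall>i<n. norm (u i) = 1"
  proof -
    have "ang (u i) (side n B i) = ang (side n B i) (u (Suc i mod n))
        \<longleftrightarrow> u (Suc i mod n) = wv n B i * cnj (u i)" if i: "i < n" for i
    proof -
      have "Suc i mod n < n" using i by simp
      hence "norm (u (Suc i mod n)) = 1" using nu by blast
      thus ?thesis unfolding ang_def wv_def
        using step_iff[of "u i" "side n B i" "u (Suc i mod n)"] nu assms i by auto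
    qed
    thus ?thesis by auto
  qed
  thus ?thesis unfolding framing_def by blast
qed

lemma framing_iff:
  assumes n: "n \<ge> 2" and sn: "\<forall>i<n. side n B i \<noteq> 0"
  shows "framing n B u \<longleftrightarrow> norm (u 0) = 1 \<and> (\<forall>i<n. u i = Uu (wv n B) (u 0) i)
           \<and> Uu (wv n B) (u 0) n = u 0"
proof -
  let ?w = "wv n B"
  have wn: "\<forall>j<k. norm (?w j) = 1" if "k \<le> n" for k
    using that sn wv_norm by auto
  have modS: "Suc i mod n = (if Suc i = n then 0 else Suc i)" if "i < n" for i
    using that by auto
  show ?thesis
  proof
    assume "framing n B u"
    hence F: "\<forall>i<n. norm (u i) = 1" "\<forall>i<n. u (Suc i mod n) = ?w i * cnj (u i)"
      using framing_iff1[OF sn] by auto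
    have U: "\<forall>i<n. u i = Uu ?w (u 0) i"
    proof (intro allI impI)
      fix i assume "i < n"
      thus "u i = Uu ?w (u 0) i"
      proof (induction i)
        case 0 thus ?case by simp
      next
        case (Suc i)
        hence i: "i < n" and m: "Suc i mod n = Suc i" by auto
        have IH: "u i = Uu ?w (u 0) i" using Suc.IH i by blast
        have "u (Suc i mod n) = ?w i * cnj (u i)" using F(2) i by blast
        hence "u (Suc i) = ?w i * cnj (u i)" by (simp only: m)
        also have "\<dots> = Uu ?w (u 0) (Suc i)" by (simp only: IH Uu.simps)
        finally show ?case .
      qed
    qed
    have "n - 1 < n" using n by simp
    moreover have "Suc (n - 1) = n" using n by simp
    ultimately have "u (Suc (n-1) mod n) = ?w (n-1) * cnj (u (n-1))"
      using F(2) by blast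
    moreover have "Suc (n-1) mod n = 0" using n by simp
    ultimately have "u 0 = ?w (n-1) * cnj (u (n-1))" by simp
    also have "\<dots> = Uu ?w (u 0) n"
    proof -
      have a: "u (n-1) = Uu ?w (u 0) (n-1)" using U \<open>n - 1 < n\<close> by blast
      have "Uu ?w (u 0) n = Uu ?w (u 0) (Suc (n-1))" using \<open>Suc (n - 1) = n\<close> by simp
      also have "\<dots> = ?w (n-1) * cnj (u (n-1))" by (simp only: a Uu.simps)
      finally show ?thesis by (rule sym)
    qed
    finally have c: "Uu ?w (u 0) n = u 0" by (rule sym)
    have "norm (u 0) = 1" using F(1) n by simp
    thus "norm (u 0) = 1 \<and> (\<forall>i<n. u i = Uu ?w (u 0) i) \<and> Uu ?w (u 0) n = u 0"
      using U c by blast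
  next
    assume A: "norm (u 0) = 1 \<and> (\<forall>i<n. u i = Uu ?w (u 0) i) \<and> Uu ?w (u 0) n = u 0"
    hence A1: "norm (u 0) = 1" and A2: "\<forall>i<n. u i = Uu ?w (u 0) i"
      and A3: "Uu ?w (u 0) n = u 0" by blast+
    have "norm (u i) = 1" if i: "i < n" for i
    proof -
      have e: "u i = Uu ?w (u 0) i" using A2 i by blast
      have "norm (Uu ?w (u 0) i) = 1" using Uu_norm[OF wn A1] i by simp
      thus ?thesis by (subst e)
    qed
    hence "\<forall>i<n. norm (u i) = 1" by blast
    moreover have "\<forall>i<n. u (Suc i mod n) = ?w i * cnj (u i)"
    proof (intro allI impI)
      fix i assume i: "i < n"
      have e: "Uu ?w (u 0) i = u i" using A2[rule_format, OF i] by (rule sym)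
      have "u (Suc i mod n) = Uu ?w (u 0) (Suc i)"
      proof (cases "Suc i = n")
        case True
        thus ?thesis using A3 by simp
      next
        case False
        hence "Suc i < n" using i by simp
        thus ?thesis using A2[rule_format, of "Suc i"] by simp
      qed
      also have "\<dots> = ?w i * cnj (u i)" by (simp add: e)
      finally show "u (Suc i mod n) = ?w i * cnj (u i)" .
    qed
    ultimately show "framing n B u" using framing_iff1[OF sn] by blast
  qed
qed


lemma wv_exp:
  assumes "side n B k \<noteq> 0"
  shows "wv n B k = exp (\<i> * of_real (2 * dir n B k))"
proof -
  let ?s = "side n B k"
  let ?t = "dir n B k"
  have e: "?s = of_real (norm ?s) * exp (\<i> * of_real ?t)"
    unfolding dir_def using Arg_eq[OF assms] .
  have c: "cnj ?s = of_real (norm ?s) * exp (- (\<i> * of_real ?t))"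
    by (subst e) (simp add: exp_cnj)
  define r where "r = (of_real (norm ?s) :: complex)"
  have ns: "r \<noteq> 0" using assms by (simp add: r_def)
  have e': "?s = r * exp (\<i> * of_real ?t)" using e by (simp add: r_def)
  have c': "cnj ?s = r * exp (- (\<i> * of_real ?t))" using c by (simp add: r_def)
  have "wv n B k = (r * exp (\<i> * of_real ?t)) / (r * exp (- (\<i> * of_real ?t)))"
    unfolding wv_def by (simp only: flip: e' c')
  also have "\<dots> = exp (\<i> * of_real ?t) / exp (- (\<i> * of_real ?t))" using ns by simp
  also have "\<dots> = exp (\<i> * of_real ?t - (- (\<i> * of_real ?t)))" by (rule exp_diff[symmetric])
  also have "\<i> * of_real ?t - (- (\<i> * of_real ?t)) = \<i> * of_real (2 * ?t)" by simp
  finally show ?thesis .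
qed

lemma Pp_exp:
  assumes "\<forall>j<k. w j = exp (\<i> * of_real (2 * f j))"
  shows "Pp w k = exp (\<i> * of_real (2 * Aa f k))"
  using assms
proof (induction k)
  case 0 thus ?case by simp
next
  case (Suc k)
  hence IH: "Pp w k = exp (\<i> * of_real (2 * Aa f k))" by simp
  have "Pp w (Suc k) = exp (\<i> * of_real (2 * f k)) * exp (cnj (\<i> * of_real (2 * Aa f k)))"
    using Suc.prems IH by (simp add: exp_cnj)
  also have "\<dots> = exp (\<i> * of_real (2 * f k) + cnj (\<i> * of_real (2 * Aa f k)))"
    by (rule exp_add[symmetric])
  also have "\<i> * of_real (2 * f k) + cnj (\<i> * of_real (2 * Aa f k)) = \<i> * of_real (2 * (f k - Aa f k))"
    by (simp add: algebra_simps)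
  finally show ?case by simp
qed

lemma exp_i_eq_1: "exp (\<i> * of_real (2 * a)) = 1 \<longleftrightarrow> (\<exists>k::int. a = of_int k * pi)"
proof -
  have "exp (\<i> * of_real (2 * a)) = 1 \<longleftrightarrow> (\<exists>k::int. 2 * a = of_int (2 * k) * pi)"
    by (simp add: exp_eq_1)
  also have "\<dots> \<longleftrightarrow> (\<exists>k::int. a = of_int k * pi)" by simp
  finally show ?thesis .
qed

lemma Aa_even: "Aa f (2 * m) = (\<Sum>j<m. f (2*j+1) - f (2*j))"
  by (induction m) (simp_all add: algebra_simps)

lemma sum_shift_zero:
  fixes g :: "nat \<Rightarrow> real"
  assumes "n \<ge> 1"
  shows "(\<Sum>i<n. g i - g ((i + n - 1) mod n)) = 0"
proof -
  obtain k where n: "n = Suc k" using assms by (cases n) auto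
  have "(\<Sum>i<Suc k. g ((i + Suc k - 1) mod Suc k)) = g k + (\<Sum>i<k. g ((Suc i + k) mod Suc k))"
    by (subst sum.lessThan_Suc_shift) simp
  also have "(\<Sum>i<k. g ((Suc i + k) mod Suc k)) = (\<Sum>i<k. g i)"
  proof (rule sum.cong)
    fix i assume "i \<in> {..<k}"
    hence "(Suc i + k) mod Suc k = i"
      by (metis add_Suc_shift lessThan_iff less_SucI mod_add_self2 mod_less add.commute)
    thus "g ((Suc i + k) mod Suc k) = g i" by simp
  qed simp
  finally have "(\<Sum>i<n. g ((i + n - 1) mod n)) = (\<Sum>i<n. g i)" using n by simp
  thus ?thesis by (simp add: sum_subtractf)
qed

lemma odd_set: "{i::nat. i < 2*m \<and> odd i} = (\<lambda>j. 2*j+1) ` {..<m}"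
proof
  show "{i. i < 2*m \<and> odd i} \<subseteq> (\<lambda>j. 2*j+1) ` {..<m}"
  proof
    fix i assume "i \<in> {i. i < 2*m \<and> odd i}"
    hence i: "i < 2*m" "odd i" by auto
    then obtain j where j: "i = 2*j+1" by (metis oddE)
    hence "j < m" using i by simp
    thus "i \<in> (\<lambda>j. 2*j+1) ` {..<m}" using j by auto
  qed
qed auto

lemma odd_sum:
  assumes "n = 2 * m"
  shows "(\<Sum>i\<in>{i. i < n \<and> odd i}. ext_angle n B i) = Aa (dir n B) n"
proof -
  have "(\<Sum>i\<in>{i. i < n \<and> odd i}. ext_angle n B i) = (\<Sum>j<m. ext_angle n B (2*j+1))"
    unfolding assms odd_set by (subst sum.reindex) (auto simp: inj_on_def)
  also have "\<dots> = (\<Sum>j<m. dir n B (2*j+1) - dir n B (2*j))"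
  proof (rule sum.cong)
    fix j assume "j \<in> {..<m}"
    hence "(2*j+1 + n - 1) mod n = 2*j" using assms by simp
    thus "ext_angle n B (2*j+1) = dir n B (2*j+1) - dir n B (2*j)"
      unfolding ext_angle_def by simp
  qed simp
  also have "\<dots> = Aa (dir n B) n" using assms Aa_even by simp
  finally show ?thesis .
qed

lemma even_sum:
  assumes "n = 2 * m" "m \<ge> 1"
  shows "(\<Sum>i\<in>{i. i < n \<and> even i}. ext_angle n B i) = - Aa (dir n B) n"
proof -
  have un: "{..<n} = {i. i < n \<and> odd i} \<union> {i. i < n \<and> even i}" by auto
  have "(\<Sum>i<n. ext_angle n B i) = 0"
    unfolding ext_angle_def using sum_shift_zero[of n "dir n B"] assms by simp
  moreover have "(\<Sum>i<n. ext_angle n B i) = (\<Sum>i\<in>{i. i < n \<and> odd i}. ext_angle n B i)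
      + (\<Sum>i\<in>{i. i < n \<and> even i}. ext_angle n B i)"
    unfolding un by (rule sum.union_disjoint) auto
  ultimately show ?thesis using odd_sum[OF assms(1)] by simp
qed

theorem lemma2p2:
  fixes n :: nat and B :: "nat \<Rightarrow> complex"
  assumes "n \<ge> 2"
    and "\<forall>i<n. B i \<noteq> B (Suc i mod n)"
  shows "(odd n \<longrightarrow>
            (\<exists>u. framing n B u \<and>
               (\<forall>v. framing n B v \<longrightarrow> (\<forall>i<n. v i = u i) \<or> (\<forall>i<n. v i = - u i))))
       \<and> (even n \<longrightarrow>
            ((\<exists>u. framing n B u) \<longleftrightarrow>
               (\<exists>k::int. (\<Sum>i\<in>{i. i < n \<and> odd i}. ext_angle n B i) = of_int k * pi) \<and>
               (\<exists>k::int. (\<Sum>i\<in>{i. i < n \<and> even i}. ext_angle n B i) = of_int k * pi))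
          \<and> ((\<exists>u. framing n B u) \<longrightarrow>
               (\<forall>z. norm z = 1 \<longrightarrow>
                  (\<exists>u. framing n B u \<and> u 0 = z \<and>
                     (\<forall>v. framing n B v \<and> v 0 = z \<longrightarrow> (\<forall>i<n. v i = u i))))))"
proof -
  let ?w = "wv n B"
  have sn: "\<forall>i<n. side n B i \<noteq> 0" using assms(2) unfolding side_def by (metis right_minus_eq)
  have wn: "\<forall>j<n. norm (?w j) = 1" using sn wv_norm by blast
  note FI = framing_iff[OF assms(1) sn]
  let ?P = "Pp ?w n"
  have Pn: "norm ?P = 1" using Pp_norm wn by blast
  have FU: "framing n B (Uu ?w z)" if "norm z = 1" "Uu ?w z n = z" for z
    using FI that by simp
  have FV: "v i = Uu ?w (v 0) i" if "framing n B v" "i < n" for v i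
    using FI that by blast
  have FV0: "norm (v 0) = 1" "Uu ?w (v 0) n = v 0" if "framing n B v" for v
    using FI that by blast+
  have part1: "odd n \<longrightarrow>
            (\<exists>u. framing n B u \<and>
               (\<forall>v. framing n B v \<longrightarrow> (\<forall>i<n. v i = u i) \<or> (\<forall>i<n. v i = - u i)))"
  proof
    assume odd: "odd n"
    have Un: "Uu ?w y n = ?P * cnj y" for y using odd by (simp add: Uu_Pp)
    define z where "z = csqrt ?P"
    have zn: "norm z = 1" using Pn by (simp add: z_def norm_csqrt)
    have zz: "z * z = ?P" unfolding z_def by (metis power2_csqrt power2_eq_square)
    have zc: "z * cnj z = 1" using complex_norm_square[of z] zn by simp
    have fx: "?P * cnj z = z"
    proof -
      have "?P * cnj z = z * (z * cnj z)" by (simp flip: zz add: algebra_simps)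
      thus ?thesis using zc by simp
    qed
    have fu: "framing n B (Uu ?w z)" using FU[OF zn] Un fx by simp
    show "\<exists>u. framing n B u \<and>
               (\<forall>v. framing n B v \<longrightarrow> (\<forall>i<n. v i = u i) \<or> (\<forall>i<n. v i = - u i))"
    proof (intro exI conjI allI impI)
      show "framing n B (Uu ?w z)" by (rule fu)
    next
      fix v assume fv: "framing n B v"
      let ?y = "v 0"
      have yn: "norm ?y = 1" and yf: "?P * cnj ?y = ?y" using FV0[OF fv] Un by auto
      have yc: "?y * cnj ?y = 1" using complex_norm_square[of ?y] yn by simp
      have "?y * ?y = ?P * (?y * cnj ?y)" using yf by (metis mult.assoc mult.commute)
      hence "?y * ?y = z * z" using yc zz by simp
      hence "(?y - z) * (?y + z) = 0" by (simp add: algebra_simps)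
      hence "?y = z \<or> ?y = - z" by (simp add: eq_neg_iff_add_eq_0)
      thus "(\<forall>i<n. v i = Uu ?w z i) \<or> (\<forall>i<n. v i = - Uu ?w z i)"
      proof
        assume "?y = z"
        thus ?thesis using FV[OF fv] by auto
      next
        assume "?y = - z"
        thus ?thesis using FV[OF fv] Uu_neg by metis
      qed
    qed
  qed
  have part2: "even n \<longrightarrow>
            ((\<exists>u. framing n B u) \<longleftrightarrow>
               (\<exists>k::int. (\<Sum>i\<in>{i. i < n \<and> odd i}. ext_angle n B i) = of_int k * pi) \<and>
               (\<exists>k::int. (\<Sum>i\<in>{i. i < n \<and> even i}. ext_angle n B i) = of_int k * pi))
          \<and> ((\<exists>u. framing n B u) \<longrightarrow>
               (\<forall>z. norm z = 1 \<longrightarrow>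
                  (\<exists>u. framing n B u \<and> u 0 = z \<and>
                     (\<forall>v. framing n B v \<and> v 0 = z \<longrightarrow> (\<forall>i<n. v i = u i)))))"
    (is "_ \<longrightarrow> ?G")
  proof
    assume ev: "even n"
    then obtain m where m: "n = 2 * m" by blast
    have m1: "m \<ge> 1" using m assms(1) by simp
    have Un: "Uu ?w y n = ?P * y" for y using ev by (simp add: Uu_Pp)
    have exP: "(\<exists>u. framing n B u) \<longleftrightarrow> ?P = 1"
    proof
      assume "\<exists>u. framing n B u"
      then obtain v where fv: "framing n B v" by blast
      have yn: "norm (v 0) = 1" and yf: "?P * v 0 = v 0" using FV0[OF fv] Un by auto
      have "v 0 \<noteq> 0" using yn by auto
      thus "?P = 1" using yf by simp
    next
      assume "?P = 1"
      hence "framing n B (Uu ?w 1)" using FU[of 1] Un by simp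
      thus "\<exists>u. framing n B u" by blast
    qed
    let ?A = "Aa (dir n B) n"
    have "\<forall>j<n. ?w j = exp (\<i> * of_real (2 * dir n B j))" using sn wv_exp by blast
    hence "?P = exp (\<i> * of_real (2 * ?A))" by (rule Pp_exp)
    hence PA: "?P = 1 \<longleftrightarrow> (\<exists>k::int. ?A = of_int k * pi)" using exp_i_eq_1 by simp
    have os: "(\<Sum>i\<in>{i. i < n \<and> odd i}. ext_angle n B i) = ?A" using odd_sum[OF m] .
    have es: "(\<Sum>i\<in>{i. i < n \<and> even i}. ext_angle n B i) = - ?A" using even_sum[OF m m1] .
    have c1: "(\<exists>u. framing n B u) \<longleftrightarrow>
               (\<exists>k::int. (\<Sum>i\<in>{i. i < n \<and> odd i}. ext_angle n B i) = of_int k * pi) \<and>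
               (\<exists>k::int. (\<Sum>i\<in>{i. i < n \<and> even i}. ext_angle n B i) = of_int k * pi)"
    proof -
      have "(\<exists>k::int. ?A = of_int k * pi) \<longleftrightarrow>
            (\<exists>k::int. ?A = of_int k * pi) \<and> (\<exists>k::int. - ?A = of_int k * pi)"
      proof safe
        fix k :: int assume "?A = of_int k * pi"
        hence "- ?A = of_int (-k) * pi" by simp
        thus "\<exists>k::int. - ?A = of_int k * pi" by blast
      qed blast
      thus ?thesis unfolding os es exP PA .
    qed
    have c2: "(\<exists>u. framing n B u) \<longrightarrow>
               (\<forall>z. norm z = 1 \<longrightarrow>
                  (\<exists>u. framing n B u \<and> u 0 = z \<and>
                     (\<forall>v. framing n B v \<and> v 0 = z \<longrightarrow> (\<forall>i<n. v i = u i))))"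
    proof (intro impI allI)
      fix z :: complex assume "\<exists>u. framing n B u" and zn: "norm z = 1"
      hence P1: "?P = 1" using exP by blast
      show "\<exists>u. framing n B u \<and> u 0 = z \<and>
                     (\<forall>v. framing n B v \<and> v 0 = z \<longrightarrow> (\<forall>i<n. v i = u i))"
      proof (intro exI conjI allI impI)
        show "framing n B (Uu ?w z)" using FU[OF zn] Un P1 by simp
        show "Uu ?w z 0 = z" by simp
      next
        fix v i assume "framing n B v \<and> v 0 = z" "i < n"
        thus "v i = Uu ?w z i" using FV by blast
      qed
    qed
    show ?G using c1 c2 by (rule conjI)
  qed
  show ?thesis using part1 part2 by blast
qed

end
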